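(* Let $\Sigma=(X,\mathcal{S},\phi)$ be a forward complete dynamical system. Let $t_1>0$, $G_0>0$, and let $\beta$ be a function of class $\mathcal{K}_\infty$ such that $\limsup_{r\downarrow 0}\frac{\beta(r)}{r}<+\infty$ and $$\|\phi(t,x,\sigma)\|\le G_0\,\beta(\|x\|)\quad \text{for all } t\in[0,t_1],\ x\in X,\ \sigma\in\mathcal{S}.$$ Then: (i) If there exist $R>0$, a functional $V:B_X(0,R)\to\mathbb{R}_+$ and $p,c>0$ such that for every $x\in B_X(0,R)$ and $\sigma\in\mathcal{S}$, $$V(x)\le c\|x\|^p,\qquad \underline{D}_\sigma V(x)\le -\|x\|^p,$$ and such that, for every $x\in B_X(0,R)$ and $\sigma\in\mathcal{S}$, the map $t\mapsto V(\phi(t,x,\sigma))$ is continuous from the left at every $t>0$ such that $\phi(t,x,\sigma)\in B_X(0,R)$, then $\Sigma$ is ULES. (ii) If for every $R>0$ there exist $V_R:B_X(0,R)\to\mathbb{R}_+$, $p_R>0$, $c_R>0$ satisfying all the hypotheses of (i) with $V=V_R$, $p=p_R$, $c=c_R$, and moreover $$\limsup_{R\to+\infty}\beta^{-1}\!\left(\frac{R}{G_0}\right)\min\left\{1,\left(\frac{t_1}{c_R}\right)^{1/p_R}\right\}=+\infty,$$ then $\Sigma$ is USGES. (iii) If $\beta$ is the identity function and there exist $p,c>0$ and a functional $V:X\to\mathbb{R}_+$ such that for every $x\in X$ and $\sigma\in\mathcal{S}$ the map $t\mapsto V(\phi(t,x,\sigma))$ is continuous from the left, $V(x)\le c\|x\|^p$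 and $\underline{D}_\sigma V(x)\le-\|x\|^p$, then $\Sigma$ is UGES.
   Context: $(X,\|\cdot\|)$ is a Banach space and $B_X(x,r)$ is the closed ball of center $x$ and radius $r$. A function $\alpha:\mathbb{R}_+\to\mathbb{R}_+$ is of class $\mathcal{K}_\infty$ if it is continuous, increasing, unbounded and $\alpha(0)=0$. Let $\mathcal{Q}$ be a nonempty set and $\mathcal{S}$ a set of functions $\sigma:\mathbb{R}_+\to\mathcal{Q}$ closed by time-shift (for $\sigma\in\mathcal{S}$, $\tau\ge0$, $\mathbb{T}_\tau\sigma:s\mapsto\sigma(\tau+s)$ is in $\mathcal{S}$) and by concatenation (for $\sigma_1,\sigma_2\in\mathcal{S}$, $\tau>0$, the function equal to $\sigma_1$ on $[0,\tau]$ and with $\sigma(\tau+t)=\sigma_2(t)$ for $t>0$ is in $\mathcal{S}$). A triple $\Sigma=(X,\mathcal{S},\phi)$ with $\phi:\mathbb{R}_+\times X\times\mathcal{S}\to X$ is a forward complete dynamical system if: $\phi(0,x,\sigma)=x$; $\phi(t,x,\tilde\sigma)=\phi(t,x,\sigma)$ whenever $\tilde\sigma=\sigma$ on $[0,t]$; $t\mapsto\phi(t,x,\sigma)$ is continuous; $\phi(\tau,\phi(t,x,\sigma),\mathbb{T}_t\sigma)=\phi(t+\tau,x,\sigma)$ for all $t,\tau\ge0$. The lower Dini derivative of $V$ along $\Sigma$ is $\underline{D}_\sigma V(x)=\liminf_{h\downarrow0}\frac1h\big(V(\phi(h,x,\sigma))-V(x)\big)$. $\Sigma$ is ULES if there exist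 $R,M,\lambda>0$ with $\|\phi(t,x,\sigma)\|\le Me^{-\lambda t}\|x\|$ for all $t\ge0$, $x\in B_X(0,R)$, $\sigma\in\mathcal{S}$; USGES if for every $r>0$ there exist $M(r),\lambda(r)>0$ with $\|\phi(t,x,\sigma)\|\le M(r)e^{-\lambda(r)t}\|x\|$ for all $t\ge0$, $x\in B_X(0,r)$, $\sigma\in\mathcal{S}$; UGES if there exist $M,\lambda>0$ with $\|\phi(t,x,\sigma)\|\le Me^{-\lambda t}\|x\|$ for all $t\ge0$, $x\in X$, $\sigma\in\mathcal{S}$. *)

theory Defs
  imports "HOL-Analysis.Analysis"
begin

text \<open>Signals are functions real \<Rightarrow> 'q; only their values on [0,\<infinity>) matter.\<close>

definition shift_closed :: "(real \<Rightarrow> 'q) set \<Rightarrow> bool" where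
  "shift_closed S \<longleftrightarrow> (\<forall>\<sigma>\<in>S. \<forall>\<tau>\<ge>0. (\<lambda>s. \<sigma> (\<tau> + s)) \<in> S)"

definition concat_closed :: "(real \<Rightarrow> 'q) set \<Rightarrow> bool" where
  "concat_closed S \<longleftrightarrow> (\<forall>\<sigma>1\<in>S. \<forall>\<sigma>2\<in>S. \<forall>\<tau>>0.
      (\<lambda>t. if t \<le> \<tau> then \<sigma>1 t else \<sigma>2 (t - \<tau>)) \<in> S)"

definition forward_complete_ds ::
  "(real \<Rightarrow> 'q) set \<Rightarrow> (real \<Rightarrow> 'x::real_normed_vector \<Rightarrow> (real \<Rightarrow> 'q) \<Rightarrow> 'x) \<Rightarrow> bool" where
  "forward_complete_ds S \<phi> \<longleftrightarrow>
     shift_closed S \<and> concat_closed S \<and>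
     (\<forall>x. \<forall>\<sigma>\<in>S. \<phi> 0 x \<sigma> = x) \<and>
     (\<forall>x. \<forall>\<sigma>\<in>S. \<forall>\<sigma>'\<in>S. \<forall>t\<ge>0. (\<forall>s\<in>{0..t}. \<sigma>' s = \<sigma> s) \<longrightarrow> \<phi> t x \<sigma>' = \<phi> t x \<sigma>) \<and>
     (\<forall>x. \<forall>\<sigma>\<in>S. continuous_on {0..} (\<lambda>t. \<phi> t x \<sigma>)) \<and>
     (\<forall>x. \<forall>\<sigma>\<in>S. \<forall>t\<ge>0. \<forall>\<tau>\<ge>0. \<phi> \<tau> (\<phi> t x \<sigma>) (\<lambda>s. \<sigma> (t + s)) = \<phi> (t + \<tau>) x \<sigma>)"

definition class_K_inf :: "(real \<Rightarrow> real) \<Rightarrow> bool" where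
  "class_K_inf \<alpha> \<longleftrightarrow> continuous_on {0..} \<alpha> \<and> strict_mono_on {0..} \<alpha> \<and>
     \<alpha> 0 = 0 \<and> (\<forall>M. \<exists>r\<ge>0. \<alpha> r > M)"

definition lower_dini ::
  "('x \<Rightarrow> real) \<Rightarrow> (real \<Rightarrow> 'x \<Rightarrow> 's \<Rightarrow> 'x) \<Rightarrow> 's \<Rightarrow> 'x \<Rightarrow> ereal" where
  "lower_dini V \<phi> \<sigma> x = Liminf (at_right 0) (\<lambda>h. ereal ((V (\<phi> h x \<sigma>) - V x) / h))"

definition ULES :: "(real \<Rightarrow> 'q) set \<Rightarrow> (real \<Rightarrow> 'x::real_normed_vector \<Rightarrow> (real \<Rightarrow> 'q) \<Rightarrow> 'x) \<Rightarrow> bool" where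
  "ULES S \<phi> \<longleftrightarrow> (\<exists>R>0. \<exists>M>0. \<exists>lam>0. \<forall>t\<ge>0. \<forall>x\<in>cball 0 R. \<forall>\<sigma>\<in>S.
      norm (\<phi> t x \<sigma>) \<le> M * exp (- lam * t) * norm x)"

definition USGES :: "(real \<Rightarrow> 'q) set \<Rightarrow> (real \<Rightarrow> 'x::real_normed_vector \<Rightarrow> (real \<Rightarrow> 'q) \<Rightarrow> 'x) \<Rightarrow> bool" where
  "USGES S \<phi> \<longleftrightarrow> (\<forall>r>0. \<exists>M>0. \<exists>lam>0. \<forall>t\<ge>0. \<forall>x\<in>cball 0 r. \<forall>\<sigma>\<in>S.
      norm (\<phi> t x \<sigma>) \<le> M * exp (- lam * t) * norm x)"

definition UGES :: "(real \<Rightarrow> 'q) set \<Rightarrow> (real \<Rightarrow> 'x::real_normed_vector \<Rightarrow> (real \<Rightarrow> 'q) \<Rightarrow> 'x) \<Rightarrow> bool" where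
  "UGES S \<phi> \<longleftrightarrow> (\<exists>M>0. \<exists>lam>0. \<forall>t\<ge>0. \<forall>x. \<forall>\<sigma>\<in>S.
      norm (\<phi> t x \<sigma>) \<le> M * exp (- lam * t) * norm x)"

text \<open>Hypotheses of item (i): V is a functional on the closed ball B_X(0,R) (its values
  outside the ball are irrelevant except through the Dini derivative at boundary points).\<close>
definition local_lyap ::
  "(real \<Rightarrow> 'q) set \<Rightarrow> (real \<Rightarrow> 'x::real_normed_vector \<Rightarrow> (real \<Rightarrow> 'q) \<Rightarrow> 'x) \<Rightarrow>
   real \<Rightarrow> ('x \<Rightarrow> real) \<Rightarrow> real \<Rightarrow> real \<Rightarrow> bool" where
  "local_lyap S \<phi> R V p c \<longleftrightarrow>
     (\<forall>x\<in>cball 0 R. V x \<ge> 0 \<and> V x \<le> c * norm x powr p \<and>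
        (\<forall>\<sigma>\<in>S. lower_dini V \<phi> \<sigma> x \<le> ereal (- (norm x powr p)) \<and>
           (\<forall>t>0. \<phi> t x \<sigma> \<in> cball 0 R \<longrightarrow> continuous (at_left t) (\<lambda>s. V (\<phi> s x \<sigma>)))))"

end

theory Submission imports Defs begin

lemma dini_mono:
  fixes g :: "real \<Rightarrow> real"
  assumes ab: "a \<le> b"
    and H1: "\<And>u e d. a \<le> u \<Longrightarrow> u < b \<Longrightarrow> e > 0 \<Longrightarrow> d > 0 \<Longrightarrow>
               \<exists>h. 0 < h \<and> h < d \<and> g (u + h) \<le> g u + e * h"
    and H2: "\<And>u. a < u \<Longrightarrow> u \<le> b \<Longrightarrow> continuous (at_left u) g"
  shows "g b \<le> g a"
proof -
  have key: "g b - e * b \<le> g a - e * a" if e: "e > 0" for e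
  proof -
    define k where "k u = g u - e * u" for u
    define T where "T = {u\<in>{a..b}. k u \<le> k a}"
    define s where "s = Sup T"
    have aT: "a \<in> T" using ab by (auto simp: T_def)
    have bdd: "bdd_above T" by (auto simp: T_def bdd_above_def)
    have Tne: "T \<noteq> {}" using aT by auto
    have as: "a \<le> s" unfolding s_def using aT bdd by (rule cSup_upper)
    have sb: "s \<le> b" unfolding s_def using Tne by (rule cSup_least) (auto simp: T_def)
    have sT: "s \<in> T"
    proof (rule ccontr)
      assume nT: "s \<notin> T"
      then have "k a < k s" using as sb by (auto simp: T_def)
      have sa: "a < s" using nT aT as by (cases "a = s") auto
      have "continuous (at_left s) k" unfolding k_def
        using H2[OF sa sb] by (intro continuous_intros) auto
      then have "(k \<longlongrightarrow> k s) (at_left s)" by (simp add: continuous_within)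
      then have "eventually (\<lambda>u. k a < k u) (at_left s)"
        using \<open>k a < k s\<close> by (rule order_tendstoD(1))
      then obtain b' where b': "b' < s" "\<And>y. y > b' \<Longrightarrow> y < s \<Longrightarrow> k a < k y"
        using sa by (auto simp: eventually_at_left)
      have "max b' a < s" using b' sa by auto
      then obtain t where t: "t \<in> T" "max b' a < t"
        using less_cSup_iff[OF Tne bdd] unfolding s_def by auto
      have "t \<le> s" unfolding s_def using t(1) bdd by (rule cSup_upper)
      then have "t < s" using t nT by (cases "t = s") auto
      then have "k a < k t" using b' t by auto
      then show False using t by (auto simp: T_def)
    qed
    have "s = b"
    proof (rule ccontr)
      assume "s \<noteq> b"
      then have "s < b" using sb by auto
      obtain h where h: "0 < h" "h < b - s" "g (s + h) \<le> g s + (e/2) * h"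
        using H1[OF as \<open>s < b\<close>, of "e/2" "b - s"] e \<open>s < b\<close> by auto
      have "e * h > 0" using h e by simp
      then have "k (s + h) < k s" using h(3) unfolding k_def by (simp add: algebra_simps)
      also have "k s \<le> k a" using sT by (auto simp: T_def)
      finally have "s + h \<in> T" using h as by (auto simp: T_def)
      then have "s + h \<le> s" unfolding s_def using bdd by (rule cSup_upper)
      then show False using h by auto
    qed
    then show ?thesis using sT by (auto simp: T_def k_def)
  qed
  show ?thesis
  proof (rule field_le_epsilon)
    fix e :: real assume e: "e > 0"
    have "g b - (e / (b - a + 1)) * b \<le> g a - (e / (b - a + 1)) * a"
      using key[of "e / (b - a + 1)"] e ab by auto
    then have "g b \<le> g a + (e / (b - a + 1)) * (b - a)" by (simp add: right_diff_distrib)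
    also have "(e / (b - a + 1)) * (b - a) \<le> e"
      using e ab by (simp add: field_simps)
    finally show "g b \<le> g a + e" by simp
  qed
qed

lemma dini_extract:
  assumes "lower_dini V \<phi> \<sigma> y \<le> ereal q" "e > 0" "d > 0"
  shows "\<exists>h. 0 < h \<and> h < d \<and> (V (\<phi> h y \<sigma>) - V y) / h < q + e"
proof (rule ccontr)
  assume "\<not> ?thesis"
  then have "\<forall>h. 0 < h \<and> h < d \<longrightarrow> q + e \<le> (V (\<phi> h y \<sigma>) - V y) / h" by (meson not_less)
  then have "eventually (\<lambda>h. ereal (q + e) \<le> ereal ((V (\<phi> h y \<sigma>) - V y) / h)) (at_right 0)"
    using assms(3) unfolding eventually_at_right[OF assms(3)] by (intro exI[of _ d]) auto
  then have "ereal (q + e) \<le> lower_dini V \<phi> \<sigma> y"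
    unfolding lower_dini_def by (rule Liminf_bounded)
  then have "ereal (q + e) \<le> ereal q" using assms(1) by (rule order_trans)
  with assms(2) show False by simp
qed

lemma fcds_facts:
  assumes "forward_complete_ds S \<phi>"
  shows "\<And>\<sigma> a. \<sigma> \<in> S \<Longrightarrow> a \<ge> 0 \<Longrightarrow> (\<lambda>s. \<sigma> (a + s)) \<in> S"
    and "\<And>x \<sigma>. \<sigma> \<in> S \<Longrightarrow> \<phi> 0 x \<sigma> = x"
    and "\<And>x \<sigma>. \<sigma> \<in> S \<Longrightarrow> continuous_on {0..} (\<lambda>t. \<phi> t x \<sigma>)"
    and "\<And>x \<sigma> t u. \<sigma> \<in> S \<Longrightarrow> t \<ge> 0 \<Longrightarrow> u \<ge> 0 \<Longrightarrow> \<phi> u (\<phi> t x \<sigma>) (\<lambda>s. \<sigma> (t + s)) = \<phi> (t + u) x \<sigma>"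
proof -
  have sc: "shift_closed S" and i0: "\<forall>x. \<forall>\<sigma>\<in>S. \<phi> 0 x \<sigma> = x"
    and ic: "\<forall>x. \<forall>\<sigma>\<in>S. continuous_on {0..} (\<lambda>t. \<phi> t x \<sigma>)"
    and isg: "\<forall>x. \<forall>\<sigma>\<in>S. \<forall>t\<ge>0. \<forall>\<tau>\<ge>0. \<phi> \<tau> (\<phi> t x \<sigma>) (\<lambda>s. \<sigma> (t + s)) = \<phi> (t + \<tau>) x \<sigma>"
    using assms unfolding forward_complete_ds_def by blast+
  show "\<And>\<sigma> a. \<sigma> \<in> S \<Longrightarrow> a \<ge> 0 \<Longrightarrow> (\<lambda>s. \<sigma> (a + s)) \<in> S"
    using sc unfolding shift_closed_def by blast
  show "\<And>x \<sigma>. \<sigma> \<in> S \<Longrightarrow> \<phi> 0 x \<sigma> = x" using i0 by blast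
  show "\<And>x \<sigma>. \<sigma> \<in> S \<Longrightarrow> continuous_on {0..} (\<lambda>t. \<phi> t x \<sigma>)" using ic by blast
  show "\<And>x \<sigma> t u. \<sigma> \<in> S \<Longrightarrow> t \<ge> 0 \<Longrightarrow> u \<ge> 0 \<Longrightarrow> \<phi> u (\<phi> t x \<sigma>) (\<lambda>s. \<sigma> (t + s)) = \<phi> (t + u) x \<sigma>"
    using isg by blast
qed

lemma LL_D:
  assumes "local_lyap S \<phi> R V p c" "x \<in> cball 0 R"
  shows "V x \<ge> 0" "V x \<le> c * norm x powr p"
    and "\<And>\<sigma>. \<sigma> \<in> S \<Longrightarrow> lower_dini V \<phi> \<sigma> x \<le> ereal (- (norm x powr p))"
    and "\<And>\<sigma> t. \<sigma> \<in> S \<Longrightarrow> t > 0 \<Longrightarrow> \<phi> t x \<sigma> \<in> cball 0 R \<Longrightarrow> continuous (at_left t) (\<lambda>s. V (\<phi> s x \<sigma>))"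
proof -
  have H: "V x \<ge> 0 \<and> V x \<le> c * norm x powr p \<and>
        (\<forall>\<sigma>\<in>S. lower_dini V \<phi> \<sigma> x \<le> ereal (- (norm x powr p)) \<and>
           (\<forall>t>0. \<phi> t x \<sigma> \<in> cball 0 R \<longrightarrow> continuous (at_left t) (\<lambda>s. V (\<phi> s x \<sigma>))))"
    using assms unfolding local_lyap_def by blast
  then show "V x \<ge> 0" "V x \<le> c * norm x powr p" by blast+
  show "\<And>\<sigma>. \<sigma> \<in> S \<Longrightarrow> lower_dini V \<phi> \<sigma> x \<le> ereal (- (norm x powr p))" using H by blast
  show "\<And>\<sigma> t. \<sigma> \<in> S \<Longrightarrow> t > 0 \<Longrightarrow> \<phi> t x \<sigma> \<in> cball 0 R \<Longrightarrow> continuous (at_left t) (\<lambda>s. V (\<phi> s x \<sigma>))"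
    using H by blast
qed

lemma core:
  assumes sys: "forward_complete_ds S \<phi>" and LL: "local_lyap S \<phi> R V p c"
    and sig: "\<sigma> \<in> S" and T: "T \<ge> 0" and p: "p > 0"
    and traj: "\<forall>u\<in>{0..T}. \<phi> u x \<sigma> \<in> cball 0 R"
  shows "\<exists>s\<in>{0..T}. T * norm (\<phi> s x \<sigma>) powr p + V (\<phi> T x \<sigma>) \<le> V x"
proof -
  note F = fcds_facts[OF sys]
  have x0: "\<phi> 0 x \<sigma> = x" using F(2) sig by auto
  have xR: "x \<in> cball 0 R" using traj T x0 by force
  have "continuous_on {0..T} (\<lambda>u. norm (\<phi> u x \<sigma>))"
    using F(3)[OF sig, of x] by (intro continuous_intros) (auto elim: continuous_on_subset)
  then obtain s where s: "s \<in> {0..T}" "\<And>u. u \<in> {0..T} \<Longrightarrow> norm (\<phi> s x \<sigma>) \<le> norm (\<phi> u x \<sigma>)"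
    using continuous_attains_inf[of "{0..T}" "\<lambda>u. norm (\<phi> u x \<sigma>)"] T by auto
  define m where "m = norm (\<phi> s x \<sigma>) powr p"
  define g where "g u = V (\<phi> u x \<sigma>) + m * u" for u
  have "g T \<le> g 0"
  proof (rule dini_mono[OF T])
    fix u e d :: real assume u: "0 \<le> u" "u < T" and e: "e > 0" and d: "d > 0"
    define y where "y = \<phi> u x \<sigma>"
    define \<sigma>' where "\<sigma>' = (\<lambda>s. \<sigma> (u + s))"
    have yR: "y \<in> cball 0 R" using traj u unfolding y_def by auto
    have s': "\<sigma>' \<in> S" using F(1)[OF sig u(1)] unfolding \<sigma>'_def .
    have "lower_dini V \<phi> \<sigma>' y \<le> ereal (- (norm y powr p))"
      using LL_D(3)[OF LL yR s'] .
    from dini_extract[OF this e d] obtain h where h: "0 < h" "h < d"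
      "(V (\<phi> h y \<sigma>') - V y) / h < - (norm y powr p) + e" by auto
    have eq: "\<phi> h y \<sigma>' = \<phi> (u + h) x \<sigma>" unfolding y_def \<sigma>'_def using F(4)[OF sig u(1), of h] h by auto
    have "m \<le> norm y powr p" unfolding m_def y_def
      using s(2)[of u] u p by (intro powr_mono2) auto
    have "V (\<phi> (u + h) x \<sigma>) - V y < (- (norm y powr p) + e) * h"
      using h eq by (simp add: pos_divide_less_eq)
    then have "g (u + h) \<le> g u + e * h"
    proof -
      have "h * m \<le> h * norm y powr p" using \<open>m \<le> norm y powr p\<close> h(1) by (simp add: mult_left_mono)
      then show ?thesis using \<open>V (\<phi> (u + h) x \<sigma>) - V y < (- (norm y powr p) + e) * h\<close> 
        unfolding g_def y_def[symmetric] by (simp add: algebra_simps)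
    qed
    then show "\<exists>h. 0 < h \<and> h < d \<and> g (u + h) \<le> g u + e * h" using h by blast
  next
    fix u assume u: "0 < u" "u \<le> T"
    have "continuous (at_left u) (\<lambda>s. V (\<phi> s x \<sigma>))"
    proof -
      have "\<phi> u x \<sigma> \<in> cball 0 R" using traj u by auto
      then show ?thesis using LL_D(4)[OF LL xR sig] u by blast
    qed
    then show "continuous (at_left u) g" unfolding g_def by (intro continuous_intros)
  qed
  then have "V (\<phi> T x \<sigma>) + m * T \<le> V x" using x0 by (simp add: g_def)
  then show ?thesis using s(1) unfolding m_def by (auto simp: algebra_simps)
qed

lemma core_shift:
  assumes sys: "forward_complete_ds S \<phi>" and LL: "local_lyap S \<phi> R V p c"
    and sig: "\<sigma> \<in> S" and a: "a \<ge> 0" and T: "T \<ge> 0" and p: "p > 0"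
    and traj: "\<forall>u\<in>{a..a+T}. \<phi> u x \<sigma> \<in> cball 0 R"
  shows "\<exists>s\<in>{a..a+T}. T * norm (\<phi> s x \<sigma>) powr p + V (\<phi> (a + T) x \<sigma>) \<le> V (\<phi> a x \<sigma>)"
proof -
  note F = fcds_facts[OF sys]
  define \<sigma>' where "\<sigma>' = (\<lambda>s. \<sigma> (a + s))"
  have s': "\<sigma>' \<in> S" using F(1)[OF sig a] unfolding \<sigma>'_def .
  have eq: "\<And>u. u \<ge> 0 \<Longrightarrow> \<phi> u (\<phi> a x \<sigma>) \<sigma>' = \<phi> (a + u) x \<sigma>"
    unfolding \<sigma>'_def using F(4)[OF sig a] by blast
  have tr: "\<forall>u\<in>{0..T}. \<phi> u (\<phi> a x \<sigma>) \<sigma>' \<in> cball 0 R"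
  proof
    fix u assume "u \<in> {0..T}"
    then show "\<phi> u (\<phi> a x \<sigma>) \<sigma>' \<in> cball 0 R" using traj eq[of u] by auto
  qed
  note c6 = core[OF sys LL s' T p, of "\<phi> a x \<sigma>"]
  note c7 = c6[OF tr]
  then obtain s where s: "s \<in> {0..T}"
    "T * norm (\<phi> s (\<phi> a x \<sigma>) \<sigma>') powr p + V (\<phi> T (\<phi> a x \<sigma>) \<sigma>') \<le> V (\<phi> a x \<sigma>)" ..
  have "a + s \<in> {a..a+T}" using s(1) by auto
  moreover have "T * norm (\<phi> (a + s) x \<sigma>) powr p + V (\<phi> (a + T) x \<sigma>) \<le> V (\<phi> a x \<sigma>)"
    using s(2) eq[of s] eq[of T] s(1) T by simp
  ultimately show ?thesis ..
qed

lemma mono_shift: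
  assumes sys: "forward_complete_ds S \<phi>" and LL: "local_lyap S \<phi> R V p c"
    and sig: "\<sigma> \<in> S" and a: "a \<ge> 0" and ab: "a \<le> b" and p: "p > 0"
    and traj: "\<forall>u\<in>{a..b}. \<phi> u x \<sigma> \<in> cball 0 R"
  shows "V (\<phi> b x \<sigma>) \<le> V (\<phi> a x \<sigma>)"
proof -
  from core_shift[OF sys LL sig a _ p, of "b - a" x] traj ab obtain s where
    "(b - a) * norm (\<phi> s x \<sigma>) powr p + V (\<phi> b x \<sigma>) \<le> V (\<phi> a x \<sigma>)" by auto
  moreover have "(b - a) * norm (\<phi> s x \<sigma>) powr p \<ge> 0" using ab by simp
  ultimately show ?thesis by linarith
qed

lemma bound_shift:
  assumes sys: "forward_complete_ds S \<phi>"
    and bound: "\<forall>t\<in>{0..t1}. \<forall>x. \<forall>\<sigma>\<in>S. norm (\<phi> t x \<sigma>) \<le> G0 * \<beta> (norm x)"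
    and sig: "\<sigma> \<in> S" and s: "s \<ge> 0" "s \<le> u" "u \<le> s + t1"
  shows "norm (\<phi> u x \<sigma>) \<le> G0 * \<beta> (norm (\<phi> s x \<sigma>))"
proof -
  note F = fcds_facts[OF sys]
  have "\<phi> u x \<sigma> = \<phi> (u - s) (\<phi> s x \<sigma>) (\<lambda>v. \<sigma> (s + v))"
    using F(4)[OF sig s(1), of "u - s" x] s by simp
  moreover have "(\<lambda>v. \<sigma> (s + v)) \<in> S" using F(1)[OF sig s(1)] .
  ultimately show ?thesis using bound s by auto
qed

lemma powr_root_bound:
  fixes a b c d p :: real
  assumes "a \<ge> 0" "b \<ge> 0" "p > 0" "d > 0" "c > 0" "d * a powr p \<le> c * b powr p"
  shows "a \<le> (c / d) powr (1 / p) * b"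
proof -
  have "a powr p \<le> (c / d) * b powr p" using assms by (simp add: field_simps)
  then have "(a powr p) powr (1 / p) \<le> ((c / d) * b powr p) powr (1 / p)"
    using assms by (intro powr_mono2) auto
  also have "\<dots> = (c / d) powr (1 / p) * (b powr p) powr (1 / p)"
    by (rule powr_mult)
  finally show ?thesis using assms by (simp add: powr_powr)
qed

lemma powr_exp_bound:
  fixes a b A mu t p :: real
  assumes "a \<ge> 0" "b \<ge> 0" "p > 0" "A > 0" "a powr p \<le> A * exp (- mu * t) * b powr p"
  shows "a \<le> A powr (1 / p) * exp (- (mu / p) * t) * b"
proof -
  have "a \<le> ((A * exp (- mu * t)) / 1) powr (1 / p) * b"
    using assms by (intro powr_root_bound) auto
  also have "(A * exp (- mu * t)) / 1 = A * exp (- mu * t)" by simp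
  also have "(A * exp (- mu * t)) powr (1 / p) = A powr (1 / p) * exp (- mu * t) powr (1 / p)"
    by (rule powr_mult)
  also have "exp (- mu * t) powr (1 / p) = exp (- (mu / p) * t)"
    by (simp add: exp_powr_real)
  finally show ?thesis by (simp add: mult.assoc)
qed


lemma K_mono:
  assumes "class_K_inf \<beta>" "0 \<le> a" "a \<le> b"
  shows "\<beta> a \<le> \<beta> b"
proof -
  have "strict_mono_on {0..} \<beta>" using assms(1) by (simp add: class_K_inf_def)
  then show ?thesis by (rule strict_mono_on_leD) (use assms in auto)
qed

lemma stay:
  assumes sys: "forward_complete_ds S \<phi>" and LL: "local_lyap S \<phi> R V p c"
    and bound: "\<forall>t\<in>{0..t1}. \<forall>x. \<forall>\<sigma>\<in>S. norm (\<phi> t x \<sigma>) \<le> G0 * \<beta> (norm x)"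
    and beta: "class_K_inf \<beta>" and p: "p > 0" and c: "c > 0" and d: "d > 0" "d < t1"
    and G0: "G0 > 0" and hr1: "G0 * \<beta> r \<le> R" and hr2: "G0 * \<beta> ((c / d) powr (1 / p) * r) \<le> R"
    and sig: "\<sigma> \<in> S" and x: "norm x \<le> r"
  shows "\<forall>u\<ge>0. \<phi> u x \<sigma> \<in> cball 0 R"
proof -
  note F = fcds_facts[OF sys]
  define e where "e = t1 - d"
  have e: "e > 0" using d unfolding e_def by simp
  have P: "\<forall>u\<in>{0..d + real k * e}. \<phi> u x \<sigma> \<in> cball 0 R" for k :: nat
  proof (induction k)
    case 0
    show ?case
    proof
      fix u assume u: "u \<in> {0..d + real 0 * e}"
      then have "u \<in> {0..t1}" using d by simp
      then have "norm (\<phi> u x \<sigma>) \<le> G0 * \<beta> (norm x)" using bound sig by simp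
      also have "\<dots> \<le> G0 * \<beta> r" using K_mono[OF beta _ x] G0 by (intro mult_left_mono) auto
      finally show "\<phi> u x \<sigma> \<in> cball 0 R" using hr1 by simp
    qed
  next
    case (Suc k)
    show ?case
    proof
      fix u assume u: "u \<in> {0..d + real (Suc k) * e}"
      show "\<phi> u x \<sigma> \<in> cball 0 R"
      proof (cases "u \<le> d + real k * e")
        case True
        then have "u \<in> {0..d + real k * e}" using u by simp
        then show ?thesis by (rule bspec[OF Suc.IH])
      next
        case False
        define a where "a = real k * e"
        have a: "a \<ge> 0" using e unfolding a_def by simp
        have tr1: "\<forall>v\<in>{a..a+d}. \<phi> v x \<sigma> \<in> cball 0 R"
          by (rule ballI, rule bspec[OF Suc.IH]) (use a in \<open>auto simp: a_def\<close>)
        note cs = core_shift[where T=d and x=x, OF sys LL sig a less_imp_le[OF d(1)] p tr1]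
        from cs have "\<exists>s\<in>{a..a+d}. d * norm (\<phi> s x \<sigma>) powr p + V (\<phi> (a + d) x \<sigma>) \<le> V (\<phi> a x \<sigma>)"
          .
        then obtain s where s: "s \<in> {a..a+d}"
          "d * norm (\<phi> s x \<sigma>) powr p + V (\<phi> (a + d) x \<sigma>) \<le> V (\<phi> a x \<sigma>)" ..
        have "\<phi> (a + d) x \<sigma> \<in> cball 0 R" by (rule bspec[OF tr1]) (use d in auto)
        then have V1: "V (\<phi> (a + d) x \<sigma>) \<ge> 0" by (rule LL_D(1)[OF LL])
        have tr0: "\<forall>v\<in>{0..a}. \<phi> v x \<sigma> \<in> cball 0 R"
          by (rule ballI, rule bspec[OF Suc.IH]) (use a d in \<open>auto simp: a_def\<close>)
        have V2: "V (\<phi> a x \<sigma>) \<le> V (\<phi> 0 x \<sigma>)"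
          by (rule mono_shift[where a=0 and b=a and x=x, OF sys LL sig order_refl a p tr0])
        have x0: "\<phi> 0 x \<sigma> = x" using F(2)[OF sig] .
        have "\<phi> 0 x \<sigma> \<in> cball 0 R" by (rule bspec[OF tr0]) (use a in auto)
        then have xR: "x \<in> cball 0 R" using x0 by simp
        have "V x \<le> c * norm x powr p" by (rule LL_D(2)[OF LL xR])
        also have "\<dots> \<le> c * r powr p" using x p c by (intro mult_left_mono powr_mono2) auto
        finally have "V x \<le> c * r powr p" .
        then have dn: "d * norm (\<phi> s x \<sigma>) powr p \<le> c * r powr p" using s(2) V1 V2 unfolding x0 by linarith
        have ns: "norm (\<phi> s x \<sigma>) \<le> (c / d) powr (1 / p) * r"
        proof (rule powr_root_bound[OF norm_ge_zero _ p d(1) c dn])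
          show "0 \<le> r" using x norm_ge_zero[of x] by linarith
        qed
        have "norm (\<phi> u x \<sigma>) \<le> G0 * \<beta> (norm (\<phi> s x \<sigma>))"
        proof (rule bound_shift[OF sys bound sig])
          show "0 \<le> s" using s a by simp
          show "s \<le> u" using s False unfolding a_def by simp
          show "u \<le> s + t1" using s u unfolding a_def e_def by (simp add: algebra_simps)
        qed
        also have "\<dots> \<le> G0 * \<beta> ((c / d) powr (1 / p) * r)"
          using K_mono[OF beta _ ns] G0 by (intro mult_left_mono) auto
        finally show ?thesis using hr2 by simp
      qed
    qed
  qed
  show ?thesis
  proof (intro allI impI)
    fix u :: real assume u: "u \<ge> 0"
    define k where "k = nat (ceiling (u / e))"
    have "u / e \<le> real k" unfolding k_def by linarith
    then have "u \<le> real k * e" using e by (simp add: field_simps)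
    then have "u \<in> {0..d + real k * e}" using u d by auto
    then show "\<phi> u x \<sigma> \<in> cball 0 R" by (rule bspec[OF P])
  qed
qed


lemma two_pow_exp:
  fixes a c :: real
  assumes "a \<ge> 0" "c > 0"
  obtains n :: nat where "real n * c \<le> a" "1 / 2 ^ n \<le> 2 * exp (- (ln 2 / c) * a)"
proof -
  define n where "n = nat (floor (a / c))"
  have n1: "real n \<le> a / c" unfolding n_def using assms by (simp add: divide_nonneg_pos)
  have n2: "a / c - 1 < real n" unfolding n_def using assms by linarith
  have "real n * c \<le> a" using n1 assms by (simp add: field_simps)
  moreover have "1 / 2 ^ n \<le> 2 * exp (- (ln 2 / c) * a)"
  proof -
    have "(2::real) ^ n = exp (real n * ln 2)" by (simp add: exp_of_nat_mult)
    then have "1 / (2::real) ^ n = exp (- (real n * ln 2))" by (simp add: exp_minus field_simps)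
    also have "\<dots> \<le> exp (- ((a / c - 1) * ln 2))"
      using n2 by (intro exp_le_cancel_iff[THEN iffD2]) (simp add: mult_right_mono)
    also have "- ((a / c - 1) * ln 2) = ln 2 + (- (ln 2 / c) * a)"
      using assms by (simp add: field_simps)
    also have "exp (ln 2 + (- (ln 2 / c) * a)) = 2 * exp (- (ln 2 / c) * a)"
      unfolding exp_add[of "ln 2"] by simp
    finally show ?thesis .
  qed
  ultimately show ?thesis using that by blast
qed


lemma master_pow:
  assumes sys: "forward_complete_ds S \<phi>" and LL: "local_lyap S \<phi> R V p c"
    and bound: "\<forall>t\<in>{0..t1}. \<forall>x. \<forall>\<sigma>\<in>S. norm (\<phi> t x \<sigma>) \<le> G0 * \<beta> (norm x)"
    and beta: "class_K_inf \<beta>" and p: "p > 0" and c: "c > 0" and d: "d > 0" "d < t1"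
    and G0: "G0 > 0" and hr1: "G0 * \<beta> r \<le> R" and hr2: "G0 * \<beta> ((c / d) powr (1 / p) * r) \<le> R"
    and K: "K > 0" and Kb: "\<forall>w\<in>{0..\<rho>}. \<beta> w \<le> K * w" and R\<rho>: "R \<le> \<rho>" and r\<rho>: "r \<le> \<rho>"
    and sig: "\<sigma> \<in> S" and x: "norm x \<le> r" and t: "t \<ge> 0"
  shows "norm (\<phi> t x \<sigma>) powr p \<le> ((G0 * K) powr p * exp ((ln 2 / c) * d) * max 1 (2 * c / d))
            * exp (- (ln 2 / c) * t) * norm x powr p"
proof -
  note F = fcds_facts[OF sys]
  define \<mu> where "\<mu> = ln 2 / c"
  define v where "v u = V (\<phi> u x \<sigma>)" for u
  define Lp where "Lp = (G0 * K) powr p"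
  define Q where "Q = max 1 (2 * c / d)"
  define X where "X = norm x powr p"
  have Lp: "Lp \<ge> 0" unfolding Lp_def by simp
  have X: "X \<ge> 0" unfolding X_def by simp
  have Q1: "1 \<le> Q" "2 * c / d \<le> Q" unfolding Q_def by auto
  have st: "\<forall>u\<ge>0. \<phi> u x \<sigma> \<in> cball 0 R"
    by (rule stay[OF sys LL bound beta p c d G0 hr1 hr2 sig x])
  have inb: "\<phi> u x \<sigma> \<in> cball 0 R" if "u \<ge> 0" for u
    using st that by simp
  have trall: "\<forall>u\<in>{a..b}. \<phi> u x \<sigma> \<in> cball 0 R" if "a \<ge> 0" for a b
  proof
    fix u assume "u \<in> {a..b}"
    then show "\<phi> u x \<sigma> \<in> cball 0 R" using that by (intro inb) auto
  qed
  have nb: "norm (\<phi> u x \<sigma>) \<le> R" if "u \<ge> 0" for u using inb[OF that] by simp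
  have vnn: "v u \<ge> 0" if "u \<ge> 0" for u unfolding v_def by (rule LL_D(1)[OF LL inb[OF that]])
  have vmono: "v b \<le> v a" if "0 \<le> a" "a \<le> b" for a b
    unfolding v_def by (rule mono_shift[OF sys LL sig that p trall[OF that(1)]])
  have x0: "\<phi> 0 x \<sigma> = x" using F(2)[OF sig] .
  have v0: "v 0 \<le> c * X"
  proof -
    have "x \<in> cball 0 R" using inb[of 0] x0 by simp
    then show ?thesis unfolding v_def X_def x0 by (rule LL_D(2)[OF LL])
  qed
  have Lb: "norm (\<phi> u x \<sigma>) powr p \<le> Lp * norm (\<phi> s x \<sigma>) powr p"
    if "0 \<le> s" "s \<le> u" "u \<le> s + t1" "norm (\<phi> s x \<sigma>) \<le> \<rho>" for s u
  proof -
    have "norm (\<phi> u x \<sigma>) \<le> G0 * \<beta> (norm (\<phi> s x \<sigma>))"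
      by (rule bound_shift[OF sys bound sig that(1-3)])
    also have "\<dots> \<le> G0 * (K * norm (\<phi> s x \<sigma>))"
      using Kb that(4) G0 by (intro mult_left_mono) auto
    finally have "norm (\<phi> u x \<sigma>) powr p \<le> (G0 * K * norm (\<phi> s x \<sigma>)) powr p"
      using p by (intro powr_mono2) (auto simp: mult.assoc)
    also have "\<dots> = Lp * norm (\<phi> s x \<sigma>) powr p" unfolding Lp_def
      by (rule powr_mult)
    finally show ?thesis .
  qed
  have vhalf: "2 * v (b + c) \<le> v b" if b: "b \<ge> 0" for b
  proof -
    note cs = core_shift[where T=c and x=x, OF sys LL sig b less_imp_le[OF c] p trall[OF b]]
    then obtain s where s: "s \<in> {b..b+c}"
      "c * norm (\<phi> s x \<sigma>) powr p + V (\<phi> (b + c) x \<sigma>) \<le> V (\<phi> b x \<sigma>)" ..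
    have s0: "s \<ge> 0" using s b by simp
    have "v (b + c) \<le> v s" using s s0 by (intro vmono) auto
    also have "v s \<le> c * norm (\<phi> s x \<sigma>) powr p" unfolding v_def by (rule LL_D(2)[OF LL inb[OF s0]])
    finally show ?thesis using s(2) unfolding v_def by linarith
  qed
  have vpow: "\<forall>a. real n * c \<le> a \<longrightarrow> v a * 2 ^ n \<le> v 0" for n :: nat
  proof (induction n)
    case 0
    show ?case using vmono by simp
  next
    case (Suc n)
    show ?case
    proof (intro allI impI)
      fix a assume a: "real (Suc n) * c \<le> a"
      have b: "a - c \<ge> 0" using a c by (simp add: algebra_simps) (smt (verit) mult_nonneg_nonneg of_nat_0_le_iff)
      have "v a * 2 ^ Suc n = (2 * v (a - c + c)) * 2 ^ n" by simp
      also have "\<dots> \<le> v (a - c) * 2 ^ n" using vhalf[OF b] by (intro mult_right_mono) auto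
      also have "\<dots> \<le> v 0" using Suc.IH a by (simp add: algebra_simps)
      finally show "v a * 2 ^ Suc n \<le> v 0" .
    qed
  qed
  have vexp: "v a \<le> 2 * exp (- \<mu> * a) * (c * X)" if a: "a \<ge> 0" for a
  proof -
    obtain n :: nat where n: "real n * c \<le> a" "1 / 2 ^ n \<le> 2 * exp (- (ln 2 / c) * a)"
      using two_pow_exp[OF a c] by blast
    have "v a * 2 ^ n \<le> v 0" using vpow n(1) by blast
    then have "v a \<le> v 0 * (1 / 2 ^ n)" by (simp add: field_simps)
    also have "\<dots> \<le> v 0 * (2 * exp (- \<mu> * a))"
      using n(2) vnn[of 0] unfolding \<mu>_def by (intro mult_left_mono) auto
    also have "\<dots> \<le> (c * X) * (2 * exp (- \<mu> * a))"
      using v0 by (intro mult_right_mono) auto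
    finally show ?thesis by (simp add: algebra_simps)
  qed
  show ?thesis
  proof (cases "t \<le> d")
    case True
    have "norm (\<phi> t x \<sigma>) powr p \<le> Lp * norm (\<phi> 0 x \<sigma>) powr p"
      using True d x r\<rho> x0 t by (intro Lb) auto
    also have "\<dots> = Lp * X" unfolding x0 X_def ..
    also have "\<dots> \<le> (Lp * exp (\<mu> * d) * Q) * exp (- \<mu> * t) * X"
    proof -
      have "1 \<le> exp (\<mu> * d) * exp (- \<mu> * t)"
      proof -
        have "t * ln 2 \<le> d * ln 2" using True by (intro mult_right_mono) auto
        then have "t * ln 2 / c \<le> d * ln 2 / c" using c by (intro divide_right_mono) auto
        then show ?thesis unfolding exp_add[symmetric] \<mu>_def by (simp add: algebra_simps)
      qed
      also have "\<dots> \<le> exp (\<mu> * d) * exp (- \<mu> * t) * Q" using Q1 by simp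
      finally have "1 \<le> exp (\<mu> * d) * Q * exp (- \<mu> * t)" by (simp add: algebra_simps)
      then have "Lp * X * 1 \<le> Lp * X * (exp (\<mu> * d) * Q * exp (- \<mu> * t))"
        using Lp X by (intro mult_left_mono) auto
      then show ?thesis by (simp add: algebra_simps)
    qed
    finally show ?thesis unfolding Lp_def Q_def X_def \<mu>_def .
  next
    case False
    define a where "a = t - d"
    have a: "a \<ge> 0" using False unfolding a_def by simp
    note cs = core_shift[where T=d and x=x, OF sys LL sig a less_imp_le[OF d(1)] p trall[OF a]]
    then obtain s where s: "s \<in> {a..a+d}"
      "d * norm (\<phi> s x \<sigma>) powr p + V (\<phi> (a + d) x \<sigma>) \<le> V (\<phi> a x \<sigma>)" ..
    have s0: "s \<ge> 0" using s a by simp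
    have ad: "a + d = t" unfolding a_def by simp
    have "norm (\<phi> t x \<sigma>) powr p \<le> Lp * norm (\<phi> s x \<sigma>) powr p"
      using s s0 d nb[OF s0] R\<rho> unfolding a_def by (intro Lb) auto
    also have "d * norm (\<phi> s x \<sigma>) powr p \<le> v a"
      using s(2) vnn[of t] t unfolding v_def ad by linarith
    then have "norm (\<phi> s x \<sigma>) powr p \<le> v a / d" using d by (simp add: field_simps)
    then have "Lp * norm (\<phi> s x \<sigma>) powr p \<le> Lp * (v a / d)" using Lp by (intro mult_left_mono)
    also have "v a / d \<le> 2 * exp (- \<mu> * a) * (c * X) / d"
      using vexp[OF a] d by (simp add: divide_right_mono)
    also have "exp (- \<mu> * a) = exp (\<mu> * d) * exp (- \<mu> * t)"
      unfolding exp_add[symmetric] a_def by (simp add: algebra_simps)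
    also have "2 * (exp (\<mu> * d) * exp (- \<mu> * t)) * (c * X) / d
        = (2 * c / d) * exp (\<mu> * d) * exp (- \<mu> * t) * X" by simp
    also have "\<dots> \<le> Q * exp (\<mu> * d) * exp (- \<mu> * t) * X"
      using Q1 X by (intro mult_right_mono) auto
    finally have "norm (\<phi> t x \<sigma>) powr p \<le> Lp * (Q * exp (\<mu> * d) * exp (- \<mu> * t) * X)"
      using Lp by (simp add: mult_left_mono)
    then show ?thesis unfolding Lp_def Q_def X_def \<mu>_def by (simp add: algebra_simps)
  qed
qed


lemma master_norm:
  assumes sys: "forward_complete_ds S \<phi>" and LL: "local_lyap S \<phi> R V p c"
    and bound: "\<forall>t\<in>{0..t1}. \<forall>x. \<forall>\<sigma>\<in>S. norm (\<phi> t x \<sigma>) \<le> G0 * \<beta> (norm x)"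
    and beta: "class_K_inf \<beta>" and p: "p > 0" and c: "c > 0" and d: "d > 0" "d < t1"
    and G0: "G0 > 0" and hr1: "G0 * \<beta> r \<le> R" and hr2: "G0 * \<beta> ((c / d) powr (1 / p) * r) \<le> R"
    and K: "K > 0" and Kb: "\<forall>w\<in>{0..\<rho>}. \<beta> w \<le> K * w" and R\<rho>: "R \<le> \<rho>" and r\<rho>: "r \<le> \<rho>"
    and sig: "\<sigma> \<in> S" and x: "norm x \<le> r" and t: "t \<ge> 0"
  shows "norm (\<phi> t x \<sigma>) \<le> ((G0 * K) powr p * exp ((ln 2 / c) * d) * max 1 (2 * c / d)) powr (1 / p)
            * exp (- ((ln 2 / c) / p) * t) * norm x"
proof (rule powr_exp_bound)
  show "0 < (G0 * K) powr p * exp (ln 2 / c * d) * max 1 (2 * c / d)"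
    using G0 K by simp
  show "norm (\<phi> t x \<sigma>) powr p \<le> (G0 * K) powr p * exp (ln 2 / c * d) * max 1 (2 * c / d) *
    exp (- (ln 2 / c) * t) * norm x powr p"
    by (rule master_pow[OF sys LL bound beta p c d G0 hr1 hr2 K Kb R\<rho> r\<rho> sig x t])
qed (use p in auto)

lemma beta_lin_bound:
  assumes beta: "class_K_inf \<beta>" and lin: "Limsup (at_right 0) (\<lambda>r. ereal (\<beta> r / r)) < \<infinity>"
    and rho: "\<rho> > 0"
  shows "\<exists>K>0. \<forall>w\<in>{0..\<rho>}. \<beta> w \<le> K * w"
proof -
  obtain C :: real where C: "Limsup (at_right 0) (\<lambda>r. ereal (\<beta> r / r)) < ereal C"
  proof (cases "Limsup (at_right 0) (\<lambda>r. ereal (\<beta> r / r))")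
    case (real l)
    then show ?thesis by (intro that[of "l + 1"]) simp
  next
    case PInf
    then show ?thesis using lin by simp
  next
    case MInf
    then show ?thesis by (intro that[of 0]) simp
  qed
  have "eventually (\<lambda>r. ereal (\<beta> r / r) < ereal C) (at_right 0)"
    using C Limsup_le_iff[THEN iffD1, OF order_refl] by blast
  then obtain b where b: "b > 0" "\<And>w. w > 0 \<Longrightarrow> w < b \<Longrightarrow> \<beta> w / w < C"
    unfolding eventually_at_right[OF zero_less_one] by auto
  define \<delta> where "\<delta> = min (b / 2) \<rho>"
  have \<delta>: "\<delta> > 0" "\<delta> < b" "\<delta> \<le> \<rho>" using b rho unfolding \<delta>_def by auto
  have b0: "\<beta> 0 = 0" using beta unfolding class_K_inf_def by blast
  have br: "\<beta> \<rho> \<ge> 0" using K_mono[OF beta order_refl, of \<rho>] rho b0 by simp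
  define K where "K = max C (\<beta> \<rho> / \<delta>) + 1"
  have K: "K > 0" unfolding K_def using br \<delta> by (smt (verit) divide_nonneg_pos max.cobounded2)
  have "\<beta> w \<le> K * w" if w: "w \<in> {0..\<rho>}" for w
  proof (cases "w = 0")
    case True then show ?thesis using b0 by simp
  next
    case False
    then have w0: "w > 0" using w by simp
    show ?thesis
    proof (cases "w < \<delta>")
      case True
      then have "\<beta> w / w < C" using b(2)[OF w0] \<delta> by simp
      then have "\<beta> w < C * w" using w0 by (simp add: field_simps)
      also have "\<dots> \<le> K * w" unfolding K_def using w0 by (intro mult_right_mono) auto
      finally show ?thesis by simp
    next
      case False
      have "\<beta> w \<le> \<beta> \<rho>" using K_mono[OF beta _, of w \<rho>] w by simp
      also have "\<dots> = (\<beta> \<rho> / \<delta>) * \<delta>" using \<delta> by simp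
      also have "\<dots> \<le> (\<beta> \<rho> / \<delta>) * w" using False br \<delta> by (intro mult_left_mono) auto
      also have "\<dots> \<le> K * w" unfolding K_def using w0 by (intro mult_right_mono) auto
      finally show ?thesis .
    qed
  qed
  then show ?thesis using K by blast
qed

lemma beta_surj:
  assumes beta: "class_K_inf \<beta>" and y: "y \<ge> 0"
  shows "y \<in> \<beta> ` {0..}"
proof -
  have cont: "continuous_on {0..} \<beta>" and b0: "\<beta> 0 = 0" and unb: "\<forall>M. \<exists>r\<ge>0. \<beta> r > M"
    using beta unfolding class_K_inf_def by blast+
  obtain r where r: "r \<ge> 0" "\<beta> r > y" using unb by blast
  have "\<exists>z\<ge>0. z \<le> r \<and> \<beta> z = y"
    by (rule IVT') (use b0 y r cont in \<open>auto elim: continuous_on_subset\<close>)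
  then show ?thesis by auto
qed

theorem theorem4:
  fixes S :: "(real \<Rightarrow> 'q) set"
    and \<phi> :: "real \<Rightarrow> 'x::banach \<Rightarrow> (real \<Rightarrow> 'q) \<Rightarrow> 'x"
    and \<beta> :: "real \<Rightarrow> real"
    and t1 G0 :: real
  assumes sys: "forward_complete_ds S \<phi>"
    and t1: "t1 > 0" and G0: "G0 > 0"
    and beta: "class_K_inf \<beta>"
    and beta_lin: "Limsup (at_right 0) (\<lambda>r. ereal (\<beta> r / r)) < \<infinity>"
    and bound: "\<forall>t\<in>{0..t1}. \<forall>x. \<forall>\<sigma>\<in>S. norm (\<phi> t x \<sigma>) \<le> G0 * \<beta> (norm x)"
  shows
    "((\<exists>R>0. \<exists>V p c. p > 0 \<and> c > 0 \<and> local_lyap S \<phi> R V p c) \<longrightarrow> ULES S \<phi>) \<and>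
     ((\<exists>pR cR :: real \<Rightarrow> real.
         (\<forall>R>0. pR R > 0 \<and> cR R > 0 \<and> (\<exists>V. local_lyap S \<phi> R V (pR R) (cR R))) \<and>
         Limsup at_top (\<lambda>R. ereal (inv_into {0..} \<beta> (R / G0) *
                                   min 1 ((t1 / cR R) powr (1 / pR R)))) = \<infinity>)
        \<longrightarrow> USGES S \<phi>) \<and>
     (((\<forall>r\<ge>0. \<beta> r = r) \<and>
       (\<exists>p c. \<exists>V :: 'x \<Rightarrow> real. p > 0 \<and> c > 0 \<and>
          (\<forall>x. V x \<ge> 0 \<and> V x \<le> c * norm x powr p \<and>
             (\<forall>\<sigma>\<in>S. lower_dini V \<phi> \<sigma> x \<le> ereal (- (norm x powr p)) \<and>
                (\<forall>t>0. continuous (at_left t) (\<lambda>s. V (\<phi> s x \<sigma>)))))))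
        \<longrightarrow> UGES S \<phi>)"
proof (intro conjI)
  note F = fcds_facts[OF sys]
  have ln2: "ln (2::real) > 0" by simp
  show "(\<exists>R>0. \<exists>V p c. p > 0 \<and> c > 0 \<and> local_lyap S \<phi> R V p c) \<longrightarrow> ULES S \<phi>"
  proof
    assume "\<exists>R>0. \<exists>V p c. p > 0 \<and> c > 0 \<and> local_lyap S \<phi> R V p c"
    then obtain R V p c where R: "R > 0" and p: "p > 0" and c: "c > 0" and LL: "local_lyap S \<phi> R V p c"
      by blast
    obtain K where K: "K > 0" and Kb: "\<forall>w\<in>{0..R}. \<beta> w \<le> K * w"
      using beta_lin_bound[OF beta beta_lin R] by blast
    define d where "d = t1 / 2"
    have d: "d > 0" "d < t1" using t1 unfolding d_def by auto
    define \<theta> where "\<theta> = (c / d) powr (1 / p)"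
    have \<theta>: "\<theta> \<ge> 0" unfolding \<theta>_def by simp
    define m where "m = min R (R / (G0 * K))"
    have m: "m > 0" "m \<le> R" "m \<le> R / (G0 * K)" unfolding m_def using R G0 K by auto
    define r where "r = m / (1 + \<theta>)"
    have r: "r > 0" "r \<le> m" "\<theta> * r \<le> m" unfolding r_def using m \<theta>
      by (auto simp: field_simps)
    have gen: "G0 * \<beta> w \<le> R" if "0 \<le> w" "w \<le> m" for w
    proof -
      have "\<beta> w \<le> K * w" using Kb that m by auto
      also have "\<dots> \<le> K * (R / (G0 * K))" using that m K by (intro mult_left_mono) auto
      finally have "G0 * \<beta> w \<le> G0 * (K * (R / (G0 * K)))" using G0 by (intro mult_left_mono) auto
      also have "\<dots> = R" using G0 K by simp
      finally show ?thesis .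
    qed
    have hr1: "G0 * \<beta> r \<le> R" using r by (intro gen) auto
    have hr2: "G0 * \<beta> ((c / d) powr (1 / p) * r) \<le> R" unfolding \<theta>_def[symmetric]
      using r \<theta> by (intro gen) auto
    have rR: "r \<le> R" using r m by simp
    show "ULES S \<phi>" unfolding ULES_def
    proof (intro exI conjI allI impI ballI)
      show "r > 0" by (rule r(1))
      show "((G0 * K) powr p * exp ((ln 2 / c) * d) * max 1 (2 * c / d)) powr (1 / p) > 0"
        using G0 K by simp
      show "(ln 2 / c) / p > 0" using c p by simp
      fix t :: real and x :: 'x and \<sigma> assume t: "t \<ge> 0" and x: "x \<in> cball 0 r" and sig: "\<sigma> \<in> S"
      have xn: "norm x \<le> r" using x by simp
      show "norm (\<phi> t x \<sigma>) \<le> ((G0 * K) powr p * exp ((ln 2 / c) * d) * max 1 (2 * c / d)) powr (1 / p)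
            * exp (- ((ln 2 / c) / p) * t) * norm x"
        by (rule master_norm[OF sys LL bound beta p c d G0 hr1 hr2 K Kb order_refl rR sig xn t])
    qed
  qed
  show "(\<exists>pR cR :: real \<Rightarrow> real.
         (\<forall>R>0. pR R > 0 \<and> cR R > 0 \<and> (\<exists>V. local_lyap S \<phi> R V (pR R) (cR R))) \<and>
         Limsup at_top (\<lambda>R. ereal (inv_into {0..} \<beta> (R / G0) *
                                   min 1 ((t1 / cR R) powr (1 / pR R)))) = \<infinity>)
        \<longrightarrow> USGES S \<phi>"
  proof
    assume "\<exists>pR cR :: real \<Rightarrow> real.
         (\<forall>R>0. pR R > 0 \<and> cR R > 0 \<and> (\<exists>V. local_lyap S \<phi> R V (pR R) (cR R))) \<and>
         Limsup at_top (\<lambda>R. ereal (inv_into {0..} \<beta> (R / G0) *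
                                   min 1 ((t1 / cR R) powr (1 / pR R)))) = \<infinity>"
    then obtain pR cR :: "real \<Rightarrow> real" where
      H: "\<forall>R>0. pR R > 0 \<and> cR R > 0 \<and> (\<exists>V. local_lyap S \<phi> R V (pR R) (cR R))" and
      L: "Limsup at_top (\<lambda>R. ereal (inv_into {0..} \<beta> (R / G0) *
                                   min 1 ((t1 / cR R) powr (1 / pR R)))) = \<infinity>"
      by blast
    define XX where "XX R = inv_into {0..} \<beta> (R / G0) * min 1 ((t1 / cR R) powr (1 / pR R))" for R
    show "USGES S \<phi>" unfolding USGES_def
    proof (intro allI impI)
      fix r0 :: real assume r0: "r0 > 0"
      have "\<exists>R\<ge>1. XX R > r0"
      proof (rule ccontr)
        assume "\<not> (\<exists>R\<ge>1. XX R > r0)"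
        then have "\<forall>R\<ge>1. ereal (XX R) \<le> ereal r0" by auto
        then have "eventually (\<lambda>R. ereal (XX R) \<le> ereal r0) at_top"
          unfolding eventually_at_top_linorder by blast
        then have "Limsup at_top (\<lambda>R. ereal (XX R)) \<le> ereal r0" by (rule Limsup_bounded)
        then show False using L unfolding XX_def by simp
      qed
      then obtain R where R1: "R \<ge> 1" and XR: "XX R > r0" by blast
      have R: "R > 0" using R1 by simp
      define p where "p = pR R"
      define c where "c = cR R"
      have p: "p > 0" and c: "c > 0" and "\<exists>V. local_lyap S \<phi> R V p c"
        using H R unfolding p_def c_def by auto
      then obtain V where LL: "local_lyap S \<phi> R V p c" by blast
      define B where "B = inv_into {0..} \<beta> (R / G0)"
      have Rin: "R / G0 \<in> \<beta> ` {0..}" using beta_surj[OF beta] R G0 by simp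
      have B0: "B \<ge> 0" using inv_into_into[OF Rin] unfolding B_def by simp
      have bB: "\<beta> B = R / G0" unfolding B_def by (rule f_inv_into_f[OF Rin])
      define \<eta> where "\<eta> = (t1 / c) powr (1 / p)"
      have \<eta>: "\<eta> > 0" unfolding \<eta>_def using t1 c by simp
      define m where "m = min 1 \<eta>"
      have XRe: "XX R = B * m" unfolding XX_def B_def m_def \<eta>_def c_def p_def ..
      have m: "m > 0" "m \<le> 1" "m \<le> \<eta>" unfolding m_def using \<eta> by auto
      have Bm: "B * m > r0" using XR XRe by simp
      have Bpos: "B > 0" using Bm B0 r0 m by (cases "B = 0") auto
      have r0B: "r0 < B" using Bm B0 m mult_left_mono[OF m(2) B0] by simp
      have r0Be: "r0 < B * \<eta>" using Bm B0 m mult_left_mono[OF m(3) B0] by simp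
      define q where "q = r0 / B"
      have q: "q > 0" "q < \<eta>" unfolding q_def using r0 Bpos r0Be by (auto simp: field_simps)
      define d where "d = c * q powr p"
      have d0: "d > 0" unfolding d_def using c q by simp
      have "q powr p < \<eta> powr p" using q p by (intro powr_less_mono2) auto
      also have "\<eta> powr p = t1 / c" unfolding \<eta>_def using p t1 c by (simp add: powr_powr)
      finally have "d < t1" unfolding d_def using c by (simp add: field_simps)
      note d = d0 this
      have cd: "(c / d) powr (1 / p) * r0 = B"
      proof -
        have "c / d = 1 / q powr p" unfolding d_def using c by simp
        also have "\<dots> = (1 / q) powr p" using q by (simp add: powr_divide)
        finally have "(c / d) powr (1 / p) = ((1 / q) powr p) powr (1 / p)" by simp
        also have "\<dots> = 1 / q" using p q by (simp add: powr_powr)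
        finally show ?thesis unfolding q_def using r0 Bpos by simp
      qed
      have hr1: "G0 * \<beta> r0 \<le> R"
      proof -
        have "\<beta> r0 \<le> \<beta> B" using K_mono[OF beta _ ] r0 r0B by simp
        then have "G0 * \<beta> r0 \<le> G0 * (R / G0)" using G0 bB by (intro mult_left_mono) auto
        then show ?thesis using G0 by simp
      qed
      have hr2: "G0 * \<beta> ((c / d) powr (1 / p) * r0) \<le> R" unfolding cd bB using G0 by simp
      define \<rho> where "\<rho> = max R r0"
      have \<rho>: "\<rho> > 0" "R \<le> \<rho>" "r0 \<le> \<rho>" unfolding \<rho>_def using R by auto
      obtain K where K: "K > 0" and Kb: "\<forall>w\<in>{0..\<rho>}. \<beta> w \<le> K * w"
        using beta_lin_bound[OF beta beta_lin \<rho>(1)] by blast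
      show "\<exists>M>0. \<exists>lam>0. \<forall>t\<ge>0. \<forall>x\<in>cball 0 r0. \<forall>\<sigma>\<in>S.
          norm (\<phi> t x \<sigma>) \<le> M * exp (- lam * t) * norm x"
      proof (intro exI conjI allI impI ballI)
        show "((G0 * K) powr p * exp ((ln 2 / c) * d) * max 1 (2 * c / d)) powr (1 / p) > 0"
          using G0 K by simp
        show "(ln 2 / c) / p > 0" using c p by simp
        fix t :: real and x :: 'x and \<sigma> assume t: "t \<ge> 0" and x: "x \<in> cball 0 r0" and sig: "\<sigma> \<in> S"
        have xn: "norm x \<le> r0" using x by simp
        show "norm (\<phi> t x \<sigma>) \<le> ((G0 * K) powr p * exp ((ln 2 / c) * d) * max 1 (2 * c / d)) powr (1 / p)
              * exp (- ((ln 2 / c) / p) * t) * norm x"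
          by (rule master_norm[OF sys LL bound beta p c d G0 hr1 hr2 K Kb \<rho>(2) \<rho>(3) sig xn t])
      qed
    qed
  qed

  show "((\<forall>r\<ge>0. \<beta> r = r) \<and>
       (\<exists>p c. \<exists>V :: 'x \<Rightarrow> real. p > 0 \<and> c > 0 \<and>
          (\<forall>x. V x \<ge> 0 \<and> V x \<le> c * norm x powr p \<and>
             (\<forall>\<sigma>\<in>S. lower_dini V \<phi> \<sigma> x \<le> ereal (- (norm x powr p)) \<and>
                (\<forall>t>0. continuous (at_left t) (\<lambda>s. V (\<phi> s x \<sigma>)))))))
        \<longrightarrow> UGES S \<phi>"
  proof
    assume A: "(\<forall>r\<ge>0. \<beta> r = r) \<and>
       (\<exists>p c. \<exists>V :: 'x \<Rightarrow> real. p > 0 \<and> c > 0 \<and>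
          (\<forall>x. V x \<ge> 0 \<and> V x \<le> c * norm x powr p \<and>
             (\<forall>\<sigma>\<in>S. lower_dini V \<phi> \<sigma> x \<le> ereal (- (norm x powr p)) \<and>
                (\<forall>t>0. continuous (at_left t) (\<lambda>s. V (\<phi> s x \<sigma>))))))"
    then have bid: "\<And>r. r \<ge> 0 \<Longrightarrow> \<beta> r = r" by blast
    from A obtain p c and V :: "'x \<Rightarrow> real" where p: "p > 0" and c: "c > 0" and
      HV: "\<forall>x. V x \<ge> 0 \<and> V x \<le> c * norm x powr p \<and>
             (\<forall>\<sigma>\<in>S. lower_dini V \<phi> \<sigma> x \<le> ereal (- (norm x powr p)) \<and>
                (\<forall>t>0. continuous (at_left t) (\<lambda>s. V (\<phi> s x \<sigma>))))" by blast
    have LLall: "local_lyap S \<phi> R V p c" for R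
      unfolding local_lyap_def
    proof (intro ballI conjI allI impI)
      fix x :: 'x and \<sigma> and t :: real
      have Hx: "V x \<ge> 0 \<and> V x \<le> c * norm x powr p \<and>
             (\<forall>\<sigma>\<in>S. lower_dini V \<phi> \<sigma> x \<le> ereal (- (norm x powr p)) \<and>
                (\<forall>t>0. continuous (at_left t) (\<lambda>s. V (\<phi> s x \<sigma>))))" using HV by (rule spec)
      show "V x \<ge> 0" using Hx by (rule conjunct1)
      show "V x \<le> c * norm x powr p" using Hx by simp
      assume sig: "\<sigma> \<in> S"
      have Hs: "lower_dini V \<phi> \<sigma> x \<le> ereal (- (norm x powr p)) \<and>
                (\<forall>t>0. continuous (at_left t) (\<lambda>s. V (\<phi> s x \<sigma>)))"
        using Hx sig by simp
      show "lower_dini V \<phi> \<sigma> x \<le> ereal (- (norm x powr p))" using Hs by (rule conjunct1)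
      assume "t > 0"
      then show "continuous (at_left t) (\<lambda>s. V (\<phi> s x \<sigma>))" using Hs by simp
    qed
    define d where "d = t1 / 2"
    have d: "d > 0" "d < t1" using t1 unfolding d_def by auto
    define \<theta> where "\<theta> = (c / d) powr (1 / p)"
    have \<theta>: "\<theta> \<ge> 0" unfolding \<theta>_def by simp
    show "UGES S \<phi>" unfolding UGES_def
    proof (intro exI conjI allI impI ballI)
      show "((G0 * 1) powr p * exp ((ln 2 / c) * d) * max 1 (2 * c / d)) powr (1 / p) > 0"
        using G0 by simp
      show "(ln 2 / c) / p > 0" using c p by simp
      fix t :: real and x :: 'x and \<sigma> assume t: "t \<ge> 0" and sig: "\<sigma> \<in> S"
      define r where "r = norm x + 1"
      have r: "r > 0" and xn: "norm x \<le> r" unfolding r_def using norm_ge_zero[of x] by linarith+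
      define R where "R = G0 * (1 + \<theta>) * r"
      define \<rho> where "\<rho> = R + r"
      have R0: "R \<ge> 0" unfolding R_def using G0 \<theta> r by simp
      have \<rho>: "R \<le> \<rho>" "r \<le> \<rho>" unfolding \<rho>_def using R0 r by auto
      have Kb: "\<forall>w\<in>{0..\<rho>}. \<beta> w \<le> 1 * w" using bid by simp
      have hr1: "G0 * \<beta> r \<le> R" unfolding R_def using bid[of r] r G0 \<theta>
        by (simp add: algebra_simps mult_nonneg_nonneg)
      have hr2: "G0 * \<beta> ((c / d) powr (1 / p) * r) \<le> R"
        unfolding \<theta>_def[symmetric] R_def using bid[of "\<theta> * r"] r G0 \<theta>
        by (simp add: algebra_simps mult_nonneg_nonneg)
      show "norm (\<phi> t x \<sigma>) \<le> ((G0 * 1) powr p * exp ((ln 2 / c) * d) * max 1 (2 * c / d)) powr (1 / p)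
              * exp (- ((ln 2 / c) / p) * t) * norm x"
        by (rule master_norm[OF sys LLall bound beta p c d G0 hr1 hr2 zero_less_one Kb \<rho>(1) \<rho>(2) sig xn t])
    qed
  qed

qed

end
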